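(* Let $h:\{0,1\}^*\to\{0,1\}^*$ be the morphism defined by $h(0)=0110100110110010110$ and $h(1)=1001011001001101001$. Then the fixed point $h^\omega(0)$ avoids $\frac{7}{3}^+$-powers; that is, for every $\varepsilon>0$, $h^\omega(0)$ contains no subword that is a $\beta$-power with $\beta\ge\frac{7}{3}+\varepsilon$.
   Context: $h^\omega(0)$ is the infinite word $\lim_{n\to\infty}h^n(0)$ (well defined since $h(0)$ begins with $0$). For a rational $\beta\ge 1$, a $\beta$-power is a word of the form $x^nx'$ with $x$ a nonempty word, $x'$ a prefix of $x$, $n$ a nonnegative integer and $n+|x'|/|x|=\beta$. A word avoids $\alpha^+$-powers if it is $(\alpha+\varepsilon)$-power-free for all $\varepsilon>0$, where $\gamma$-power-free means no subword is a $\beta$-power for any rational $\beta\ge\gamma$. *)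

theory Defs
  imports Complex_Main "HOL-Library.Sublist"
begin

(* Binary alphabet {0,1} represented by the naturals 0 and 1. *)
definition h :: "nat \<Rightarrow> nat list" where
  "h a = (if a = 0
          then [0,1,1,0,1,0,0,1,1,0,1,1,0,0,1,0,1,1,0]
          else [1,0,0,1,0,1,1,0,0,1,0,0,1,1,0,1,0,0,1])"

definition hw :: "nat list \<Rightarrow> nat list" where
  "hw w = concat (map h w)"

(* the fixed point h^omega(0) = lim h^n(0), as an infinite word nat => nat;
   letter k is read off h^(k+1)(0), which has length 19^(k+1) > k *)
definition hfix :: "nat \<Rightarrow> nat" where
  "hfix k = ((hw ^^ Suc k) [0]) ! k"

definition is_power :: "'a list \<Rightarrow> real \<Rightarrow> bool" where
  "is_power u \<beta> \<longleftrightarrow> (\<exists>x x' n. x \<noteq> [] \<and> prefix x' x \<and>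
      u = concat (replicate n x) @ x' \<and>
      real n + real (length x') / real (length x) = \<beta>)"

definition subword :: "(nat \<Rightarrow> 'a) \<Rightarrow> nat \<Rightarrow> nat \<Rightarrow> 'a list" where
  "subword w i m = map w [i..<i+m]"

definition power_free :: "(nat \<Rightarrow> 'a) \<Rightarrow> real \<Rightarrow> bool" where
  "power_free w \<gamma> \<longleftrightarrow> (\<forall>i m \<beta>. \<beta> \<in> \<rat> \<and> \<beta> \<ge> 1 \<and> \<beta> \<ge> \<gamma> \<longrightarrow> \<not> is_power (subword w i m) \<beta>)"

definition avoids_plus :: "(nat \<Rightarrow> 'a) \<Rightarrow> real \<Rightarrow> bool" where
  "avoids_plus w \<alpha> \<longleftrightarrow> (\<forall>\<epsilon>>0. power_free w (\<alpha> + \<epsilon>))"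

end

theory Submission
  imports Defs
begin

lemma len_h[simp]: "length (h a) = 19"
  by (simp add: h_def)

lemma hw_Nil[simp]: "hw [] = []" by (simp add: hw_def)
lemma hw_Cons[simp]: "hw (a # w) = h a @ hw w" by (simp add: hw_def)
lemma hw_append: "hw (u @ v) = hw u @ hw v" by (simp add: hw_def)
lemma len_hw[simp]: "length (hw w) = 19 * length w"
  by (induction w) auto

lemma hw_nth: "k < length w \<Longrightarrow> j < 19 \<Longrightarrow> hw w ! (19 * k + j) = h (w ! k) ! j"
proof (induction w arbitrary: k)
  case Nil then show ?case by simp
next
  case (Cons a w)
  show ?case
  proof (cases k)
    case 0 then show ?thesis using Cons by (simp add: nth_append)
  next
    case (Suc k')
    have "hw (a # w) ! (19 * k + j) = hw w ! (19 * k' + j)"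
      using Suc by (simp add: nth_append)
    then show ?thesis using Cons Suc by simp
  qed
qed

definition W :: "nat \<Rightarrow> nat list" where "W n = (hw ^^ n) [0]"

lemma W_Suc: "W (Suc n) = hw (W n)" by (simp add: W_def)
lemma len_W: "length (W n) = 19 ^ n"
  by (induction n) (auto simp: W_def)

lemma prefix_hw: "prefix u v \<Longrightarrow> prefix (hw u) (hw v)"
  by (auto simp: prefix_def hw_append)

lemma W_prefix_Suc: "prefix (W n) (W (Suc n))"
proof (induction n)
  case 0 then show ?case by (simp add: W_def h_def)
next
  case (Suc n) then show ?case by (simp add: W_Suc prefix_hw)
qed

lemma W_prefix: "m \<le> n \<Longrightarrow> prefix (W m) (W n)"
proof (induction n rule: dec_induct)
  case base then show ?case by simp
next
  case (step n) then show ?case using W_prefix_Suc prefix_order.trans by blast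
qed

lemma prefix_nth': "prefix xs ys \<Longrightarrow> i < length xs \<Longrightarrow> xs ! i = ys ! i"
  by (auto simp: prefix_def nth_append)

lemma lt_pow19: "k < (19::nat) ^ k"
  by (induction k) auto

lemma hfix_W: "k < 19 ^ n \<Longrightarrow> hfix k = W n ! k"
proof -
  assume k: "k < 19 ^ n"
  have k2: "k < 19 ^ Suc k" using lt_pow19[of k] by simp
  let ?N = "max n (Suc k)"
  have "hfix k = W (Suc k) ! k" by (simp add: hfix_def W_def)
  also have "\<dots> = W ?N ! k"
    by (rule prefix_nth'[OF W_prefix]) (use k2 len_W in auto)
  also have "\<dots> = W n ! k"
    by (rule prefix_nth'[OF W_prefix, symmetric]) (use k len_W in auto)
  finally show ?thesis .
qed

lemma hfix_block: "j < 19 \<Longrightarrow> hfix (19 * k + j) = h (hfix k) ! j"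
proof -
  assume j: "j < 19"
  have k: "k < 19 ^ Suc k" using lt_pow19[of k] by simp
  have "19 * k + j < 19 ^ Suc (Suc k)" using k j by simp
  then have "hfix (19 * k + j) = W (Suc (Suc k)) ! (19 * k + j)" by (rule hfix_W)
  also have "\<dots> = h (W (Suc k) ! k) ! j" using hw_nth[of k "W (Suc k)" j] k j len_W
    by (simp add: W_Suc)
  also have "\<dots> = h (hfix k) ! j" using hfix_W[OF k] by simp
  finally show ?thesis .
qed

lemma h_01: "j < 19 \<Longrightarrow> h a ! j \<le> 1"
proof -
  assume "j < 19"
  then have "h a ! j \<in> set (h a)" by simp
  moreover have "set (h a) \<subseteq> {0,1}" by (simp add: h_def)
  ultimately show ?thesis by auto
qed

lemma hfix_01: "hfix k \<le> 1"
proof -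
  have "hfix k = hfix (19 * (k div 19) + k mod 19)" by simp
  also have "\<dots> = h (hfix (k div 19)) ! (k mod 19)" by (rule hfix_block) simp
  finally show ?thesis using h_01[of "k mod 19"] by simp
qed

lemma h_comp: "j < 19 \<Longrightarrow> h 0 ! j \<noteq> h 1 ! j"
proof -
  have "list_all (\<lambda>j. h 0 ! j \<noteq> h 1 ! j) [0..<19]" by code_simp
  moreover assume "j < 19"
  ultimately show ?thesis by (simp add: list_all_iff)
qed

lemma h_inj: "j < 19 \<Longrightarrow> a \<le> 1 \<Longrightarrow> b \<le> (1::nat) \<Longrightarrow> h a ! j = h b ! j \<Longrightarrow> a = b"
proof -
  assume a: "j < 19" "a \<le> 1" "b \<le> (1::nat)" "h a ! j = h b ! j"
  have "a = 0 \<or> a = 1" "b = 0 \<or> b = 1" using a by auto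
  then show ?thesis using h_comp[OF a(1)] a(4) by auto
qed

lemma hfix_inj: "j < 19 \<Longrightarrow> hfix (19 * a + j) = hfix (19 * b + j) \<Longrightarrow> hfix a = hfix b"
  by (metis h_inj hfix_01 hfix_block)

lemma sync_chk: "list_all (\<lambda>r. list_all (\<lambda>a. list_all (\<lambda>b. list_all (\<lambda>c.
   \<not> list_all (\<lambda>j. h a ! j = (if j + r < 19 then h b ! (j + r) else h c ! (j + r - 19))) [0..<19])
   [0,1]) [0,1]) [0,1]) [1..<19]"
  by code_simp

lemma in01: "a \<le> (1::nat) \<Longrightarrow> a \<in> set [0,1]" by auto

lemma sync:
  assumes per: "\<forall>j<19. hfix (19 * k + j) = hfix (19 * k + j + p)"
  shows "p mod 19 = 0"
proof (rule ccontr)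
  assume nz: "p mod 19 \<noteq> 0"
  define r where "r = p mod 19"
  define q where "q = p div 19"
  have r: "r \<in> set [1..<19]" using nz by (simp add: r_def)
  have pq: "p = 19 * q + r" by (simp add: q_def r_def)
  have "\<forall>j\<in>set [0..<19]. h (hfix k) ! j = (if j + r < 19 then h (hfix (k + q)) ! (j + r)
          else h (hfix (k + q + 1)) ! (j + r - 19))"
  proof
    fix j assume "j \<in> set [0..<19]"
    then have j: "j < 19" by simp
    have "h (hfix k) ! j = hfix (19 * k + j + p)" using per j hfix_block[OF j, of k] by simp
    also have "\<dots> = (if j + r < 19 then h (hfix (k + q)) ! (j + r)
          else h (hfix (k + q + 1)) ! (j + r - 19))"
    proof (cases "j + r < 19")
      case True
      have eq: "19 * k + j + p = 19 * (k + q) + (j + r)" using pq by simp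
      have "hfix (19 * k + j + p) = h (hfix (k + q)) ! (j + r)"
        unfolding eq by (rule hfix_block[OF True])
      with True show ?thesis by simp
    next
      case False
      have r19: "r < 19" by (simp add: r_def)
      have lt: "j + r - 19 < 19" using j r19 by arith
      have eq: "19 * k + j + p = 19 * (k + q + 1) + (j + r - 19)" using pq False by simp
      have "hfix (19 * k + j + p) = h (hfix (k + q + 1)) ! (j + r - 19)"
        unfolding eq by (rule hfix_block[OF lt])
      with False show ?thesis by simp
    qed
    finally show "h (hfix k) ! j = (if j + r < 19 then h (hfix (k + q)) ! (j + r)
          else h (hfix (k + q + 1)) ! (j + r - 19))" .
  qed
  then have "list_all (\<lambda>j. h (hfix k) ! j = (if j + r < 19 then h (hfix (k + q)) ! (j + r)
          else h (hfix (k + q + 1)) ! (j + r - 19))) [0..<19]"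
    by (simp only: list_all_iff)
  moreover have "\<forall>r\<in>set [1..<19]. \<forall>a\<in>set [0,1]. \<forall>b\<in>set [0,1]. \<forall>c\<in>set [0,1].
   \<not> list_all (\<lambda>j. h a ! j = (if j + r < 19 then h b ! (j + r) else h c ! (j + r - 19))) [0..<19]"
    using sync_chk by (simp only: list_all_iff)
  ultimately show False using r in01[OF hfix_01[of k]] in01[OF hfix_01[of "k+q"]]
      in01[OF hfix_01[of "k+q+1"]] by blast
qed

fun cr :: "nat \<Rightarrow> nat \<Rightarrow> bool list \<Rightarrow> bool" where
  "cr R c [] = True"
| "cr R c (b # bs) = (if b then Suc c < R \<and> cr R (Suc c) bs else cr R 0 bs)"

lemma cr_drop: "cr R c E \<Longrightarrow> c < R \<Longrightarrow> \<exists>c'<R. cr R c' (drop i E)"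
proof (induction E arbitrary: c i)
  case Nil then show ?case by auto
next
  case (Cons b bs)
  show ?case
  proof (cases i)
    case 0 then show ?thesis using Cons.prems by auto
  next
    case (Suc i')
    then show ?thesis using Cons by (cases b) auto
  qed
qed

lemma cr_run: "cr R c E \<Longrightarrow> c < R \<Longrightarrow> n \<le> length E \<Longrightarrow> (\<forall>t<n. E ! t) \<Longrightarrow> c + n < R"
proof (induction E arbitrary: c n)
  case Nil then show ?case by auto
next
  case (Cons b bs)
  show ?case
  proof (cases n)
    case 0 then show ?thesis using Cons.prems by auto
  next
    case (Suc n')
    have b: b using Cons.prems(4) Suc by auto
    then have "Suc c < R" "cr R (Suc c) bs" using Cons.prems(1) by auto
    moreover have "\<forall>t<n'. bs ! t" using Cons.prems(4) Suc by auto
    ultimately have "Suc c + n' < R" using Cons.IH[of "Suc c" n'] Cons.prems(3) Suc by auto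
    then show ?thesis using Suc by simp
  qed
qed

lemma cr_no_run: "cr R 0 E \<Longrightarrow> 0 < R \<Longrightarrow> i + R \<le> length E \<Longrightarrow> \<forall>d<R. E ! (i + d) \<Longrightarrow> False"
proof -
  assume a: "cr R 0 E" "0 < R" "i + R \<le> length E" "\<forall>d<R. E ! (i + d)"
  obtain c where c: "c < R" "cr R c (drop i E)" using cr_drop[OF a(1) a(2)] by blast
  have "c + R < R" by (rule cr_run[OF c(2) c(1)]) (use a in auto)
  then show False by simp
qed

definition chk :: "nat list \<Rightarrow> bool" where
  "chk V = list_all (\<lambda>p. cr (4 * p div 3 + 1) 0 (map2 (=) V (drop p V))) [1..<27]"

fun no3 :: "nat list \<Rightarrow> bool" where
  "no3 (a # b # c # r) = (\<not> (a = b \<and> b = c) \<and> no3 (b # c # r))"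
| "no3 _ = True"

lemma base_chk: "list_all (\<lambda>a. list_all (\<lambda>b. list_all (\<lambda>c. list_all (\<lambda>d. list_all (\<lambda>e.
    no3 [a,b,c,d,e] \<longrightarrow> chk (hw [a,b,c,d,e])) [0,1]) [0,1]) [0,1]) [0,1]) [0,1]"
  by code_simp

lemma chk_run:
  assumes c: "chk V" and p: "1 \<le> p" "p \<le> 26"
    and len: "i + (4 * p div 3 + 1) + p \<le> length V"
    and run: "\<forall>d < 4 * p div 3 + 1. V ! (i + d) = V ! (i + d + p)"
  shows False
proof -
  let ?R = "4 * p div 3 + 1"
  let ?E = "map2 (=) V (drop p V)"
  have "\<forall>p\<in>set [1..<27]. cr (4 * p div 3 + 1) 0 (map2 (=) V (drop p V))"
    using c by (simp only: chk_def list_all_iff)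
  then have cr: "cr ?R 0 ?E" using p by simp
  show False
  proof (rule cr_no_run[OF cr])
    show "0 < ?R" by simp
    show "i + ?R \<le> length ?E" using len by simp
    show "\<forall>d<?R. ?E ! (i + d)"
    proof (intro allI impI)
      fix d assume d: "d < ?R"
      then have "i + d < length V - p" using len by simp
      then show "?E ! (i + d)" using run d by (simp add: add.commute add.left_commute)
    qed
  qed
qed

lemma nothree_chk: "list_all (\<lambda>a. list_all (\<lambda>j. \<not> (h a ! j = h a ! (j + 1) \<and> h a ! (j + 1) = h a ! (j + 2))) [0..<17]
   \<and> h a ! 17 \<noteq> h a ! 18 \<and> h a ! 0 \<noteq> h a ! 1) [0,1]"
  by code_simp

lemma nothree: "\<not> (hfix k = hfix (k + 1) \<and> hfix (k + 1) = hfix (k + 2))"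
proof
  assume eq: "hfix k = hfix (k + 1) \<and> hfix (k + 1) = hfix (k + 2)"
  define m where "m = k div 19"
  define j where "j = k mod 19"
  have k: "k = 19 * m + j" by (simp add: m_def j_def)
  have j: "j < 19" by (simp add: j_def)
  have all: "\<forall>a\<in>set [0,1]. (\<forall>j\<in>set [0..<17]. \<not> (h a ! j = h a ! (j + 1) \<and> h a ! (j + 1) = h a ! (j + 2)))
   \<and> h a ! 17 \<noteq> h a ! 18 \<and> h a ! 0 \<noteq> h a ! 1"
    using nothree_chk by (simp only: list_all_iff)
  have A: "(\<forall>j\<in>set [0..<17]. \<not> (h (hfix m) ! j = h (hfix m) ! (j + 1) \<and> h (hfix m) ! (j + 1) = h (hfix m) ! (j + 2)))
   \<and> h (hfix m) ! 17 \<noteq> h (hfix m) ! 18"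
    using all in01[OF hfix_01[of m]] by blast
  have B: "h (hfix (m+1)) ! 0 \<noteq> h (hfix (m+1)) ! 1"
    using all in01[OF hfix_01[of "m+1"]] by blast
  show False
  proof (cases "j \<le> 16")
    case True
    have e1: "k + 1 = 19 * m + (j + 1)" "k + 2 = 19 * m + (j + 2)" using k by simp_all
    have X: "hfix k = h (hfix m) ! j" unfolding k by (rule hfix_block[OF j])
    have Y: "hfix (k+1) = h (hfix m) ! (j+1)" unfolding e1 by (rule hfix_block) (use True in simp)
    have Z: "hfix (k+2) = h (hfix m) ! (j+2)" unfolding e1 by (rule hfix_block) (use True in simp)
    have "j \<in> set [0..<17]" using True by simp
    then have "\<not> (h (hfix m) ! j = h (hfix m) ! (j + 1) \<and> h (hfix m) ! (j + 1) = h (hfix m) ! (j + 2))"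
      using A by blast
    then show False using eq X Y Z by argo
  next
    case False
    then consider "j = 17" | "j = 18" using j by linarith
    then show False
    proof cases
      case 1
      have e: "k = 19 * m + 17" "k + 1 = 19 * m + 18" using k 1 by simp_all
      have "hfix k = h (hfix m) ! 17" unfolding e(1) by (rule hfix_block) simp
      moreover have "hfix (k+1) = h (hfix m) ! 18" unfolding e(2) by (rule hfix_block) simp
      ultimately show False using eq A by argo
    next
      case 2
      have e: "k + 1 = 19 * (m + 1) + 0" "k + 2 = 19 * (m + 1) + 1" using k 2 by simp_all
      have "hfix (k+1) = h (hfix (m+1)) ! 0" unfolding e by (rule hfix_block) simp
      moreover have "hfix (k+2) = h (hfix (m+1)) ! 1" unfolding e by (rule hfix_block) simp
      ultimately show False using eq B by argo
    qed
  qed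
qed


lemma hfix_win:
  assumes s: "s < 95"
  shows "hfix (19 * k + s) = hw [hfix k, hfix (k+1), hfix (k+2), hfix (k+3), hfix (k+4)] ! s"
proof -
  let ?v = "[hfix k, hfix (k+1), hfix (k+2), hfix (k+3), hfix (k+4)]"
  define m where "m = s div 19"
  define j where "j = s mod 19"
  have sj: "s = 19 * m + j" by (simp add: m_def j_def)
  have j: "j < 19" by (simp add: j_def)
  have m: "m < 5" using s by (simp add: m_def)
  have vm: "?v ! m = hfix (k + m)"
  proof -
    have "m = 0 \<or> m = 1 \<or> m = 2 \<or> m = 3 \<or> m = 4" using m by auto
    then show ?thesis by auto
  qed
  have e: "19 * k + s = 19 * (k + m) + j" using sj by simp
  have "hfix (19 * k + s) = h (hfix (k + m)) ! j" unfolding e by (rule hfix_block[OF j])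
  also have "\<dots> = hw ?v ! (19 * m + j)" using hw_nth[of m ?v j] m j vm by simp
  finally show ?thesis using sj by simp
qed

lemma main:
  "0 < p \<Longrightarrow> \<forall>t. i \<le> t \<and> t + p < i + L \<longrightarrow> hfix t = hfix (t + p) \<Longrightarrow> 3 * L \<le> 7 * p"
proof (induction p arbitrary: i L rule: less_induct)
  case (less p)
  note per = less.prems(2)
  show ?case
  proof (rule ccontr)
    assume bad: "\<not> 3 * L \<le> 7 * p"
    show False
    proof (cases "p + 37 \<le> L")
      case True
      define k where "k = (i + 18) div 19"
      have km: "19 * k + (i + 18) mod 19 = i + 18" unfolding k_def by (rule mult_div_mod_eq)
      have "(i + 18) mod 19 < 19" by simp
      then have k1: "i \<le> 19 * k" and k2: "19 * k \<le> i + 18" using km by linarith+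
      have "\<forall>j<19. hfix (19 * k + j) = hfix (19 * k + j + p)"
      proof (intro allI impI)
        fix j :: nat assume "j < 19"
        then show "hfix (19 * k + j) = hfix (19 * k + j + p)"
          using per[rule_format, of "19 * k + j"] k1 k2 True by linarith
      qed
      then have pm: "p mod 19 = 0" by (rule sync)
      define q where "q = p div 19"
      have pq: "p = 19 * q" using mult_div_mod_eq[of 19 p] pm by (simp add: q_def)
      have q0: "0 < q" using pq less.prems(1) by simp
      have qp: "q < p" using pq q0 by simp
      define a where "a = i div 19"
      define b where "b = (i + L - p - 1) div 19"
      have am: "19 * a + i mod 19 = i" unfolding a_def by (rule mult_div_mod_eq)
      have "i mod 19 < 19" by simp
      then have a1: "19 * a \<le> i" and a2: "i < 19 * a + 19" using am by linarith+
      have bm: "19 * b + (i + L - p - 1) mod 19 = i + L - p - 1" unfolding b_def by (rule mult_div_mod_eq)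
      have "(i + L - p - 1) mod 19 < 19" by simp
      then have b1: "i + L - p - 1 < 19 * b + 19" and b2: "19 * b \<le> i + L - p - 1" using bm by linarith+
      have ab: "a \<le> b" unfolding a_def b_def by (rule div_le_mono) (use True in linarith)
      then obtain d where bd: "b = a + d" using le_Suc_ex by blast
      define L' where "L' = d + 1 + q"
      have per': "\<forall>t. a \<le> t \<and> t + q < a + L' \<longrightarrow> hfix t = hfix (t + q)"
      proof (intro allI impI)
        fix t assume t: "a \<le> t \<and> t + q < a + L'"
        then have tb: "t \<le> b" using bd by (simp add: L'_def)
        define s where "s = max i (19 * t)"
        have s1: "19 * t \<le> s" and s2: "s < 19 * t + 19" and s3: "i \<le> s"
          using a2 t by (auto simp: s_def)
        have s4: "s + p < i + L" using b2 tb True s_def by auto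
        have hs: "hfix s = hfix (s + p)" using per s3 s4 by blast
        define j where "j = s - 19 * t"
        have j: "j < 19" using s1 s2 by (simp add: j_def)
        have e1: "s = 19 * t + j" using s1 by (simp add: j_def)
        have e2: "s + p = 19 * (t + q) + j" using e1 pq by simp
        have "hfix (19 * t + j) = hfix s" by (simp only: e1)
        also have "\<dots> = hfix (s + p)" by (rule hs)
        also have "\<dots> = hfix (19 * (t + q) + j)" by (simp only: e2)
        finally show "hfix t = hfix (t + q)" by (rule hfix_inj[OF j])
      qed
      have "3 * L' \<le> 7 * q" using less.IH[OF qp q0 per'] .
      moreover have "L \<le> 19 * L'" using b1 a1 bd pq True by (simp add: L'_def)
      ultimately show False using bad pq by linarith
    next
      case False
      have p26: "p \<le> 26" using False bad by linarith
      define R where "R = 4 * p div 3 + 1"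
      have "3 * (4 * p div 3) + (4 * p) mod 3 = 4 * p" by (rule mult_div_mod_eq)
      then have R3: "3 * (R - 1) \<le> 4 * p" by (simp add: R_def)
      have RL: "R + p \<le> L" using R3 bad by (simp add: R_def)
      have R35: "R \<le> 35" using R3 p26 by (simp add: R_def)
      define k where "k = i div 19"
      define off where "off = i mod 19"
      have io: "i = 19 * k + off" by (simp add: k_def off_def)
      have off: "off < 19" by (simp add: off_def)
      define v where "v = [hfix k, hfix (k+1), hfix (k+2), hfix (k+3), hfix (k+4)]"
      have ball: "\<forall>a\<in>set [0,1]. \<forall>b\<in>set [0,1]. \<forall>c\<in>set [0,1]. \<forall>d\<in>set [0,1]. \<forall>e\<in>set [0,1].
          no3 [a,b,c,d,e] \<longrightarrow> chk (hw [a,b,c,d,e])"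
        using base_chk by (simp only: list_all_iff)
      have n3: "no3 v"
        using nothree[of k] nothree[of "k+1"] nothree[of "k+2"] by (simp add: v_def eval_nat_numeral)
      have c: "chk (hw v)"
        using ball in01[OF hfix_01[of k]] in01[OF hfix_01[of "k+1"]] in01[OF hfix_01[of "k+2"]]
          in01[OF hfix_01[of "k+3"]] in01[OF hfix_01[of "k+4"]] n3 unfolding v_def by blast
      show False
      proof (rule chk_run[OF c, of p off])
        show "1 \<le> p" using less.prems(1) by simp
        show "p \<le> 26" by (rule p26)
        show "off + (4 * p div 3 + 1) + p \<le> length (hw v)" using off R35 p26 by (simp add: v_def R_def)
        show "\<forall>d<4 * p div 3 + 1. hw v ! (off + d) = hw v ! (off + d + p)"
        proof (intro allI impI)
          fix d assume d: "d < 4 * p div 3 + 1"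
          then have dR: "d < R" by (simp add: R_def)
          have "hfix (i + d) = hfix (i + d + p)" using per dR RL by auto
          moreover have "hfix (i + d) = hw v ! (off + d)"
            using hfix_win[of "off + d" k] io off dR R35 by (simp add: v_def add.assoc)
          moreover have "hfix (i + d + p) = hw v ! (off + d + p)"
            using hfix_win[of "off + d + p" k] io off dR R35 p26 by (simp add: v_def add.assoc)
          ultimately show "hw v ! (off + d) = hw v ! (off + d + p)" by simp
        qed
      qed
    qed
  qed
qed

lemma concat_rep_Suc: "concat (replicate (Suc n) x) = concat (replicate n x) @ x"
  by (induction n) auto

lemma rep_nth: "s < n * length x \<Longrightarrow> concat (replicate n x) ! s = x ! (s mod length x)"
proof (induction n arbitrary: s)
  case 0 then show ?case by simp
next
  case (Suc n)
  show ?case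
  proof (cases "s < length x")
    case True then show ?thesis by (simp add: nth_append)
  next
    case False
    then have "s - length x < n * length x" using Suc.prems by simp
    then have "concat (replicate n x) ! (s - length x) = x ! ((s - length x) mod length x)"
      by (rule Suc.IH)
    moreover have "(s - length x) mod length x = s mod length x"
      using False by (simp add: le_mod_geq)
    ultimately show ?thesis using False by (simp add: nth_append)
  qed
qed

lemma pow_period:
  assumes pre: "prefix x' x"
    and t: "t + length x < length (concat (replicate n x) @ x')"
  shows "(concat (replicate n x) @ x') ! t = (concat (replicate n x) @ x') ! (t + length x)"
proof -
  let ?u = "concat (replicate n x) @ x'"
  let ?y = "concat (replicate (Suc n) x)"
  have py: "prefix ?u ?y" using pre by (simp only: concat_rep_Suc same_prefix_prefix)
  have ly: "length ?y = Suc n * length x" by (simp add: length_concat sum_list_replicate)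
  have lu: "length ?u \<le> length ?y" using py by (rule prefix_length_le)
  have "?u ! t = ?y ! t" using py t by (intro prefix_nth') simp_all
  also have "\<dots> = x ! (t mod length x)" using t lu ly by (intro rep_nth) simp
  also have "\<dots> = x ! ((t + length x) mod length x)" by simp
  also have "\<dots> = ?y ! (t + length x)" using t lu ly by (intro rep_nth[symmetric]) simp
  also have "\<dots> = ?u ! (t + length x)" using py t by (intro prefix_nth'[symmetric]) simp_all
  finally show ?thesis .
qed

theorem theorem13:
  shows "avoids_plus hfix (7/3)"
  unfolding avoids_plus_def power_free_def
proof (intro allI impI notI)
  fix \<epsilon> :: real and i m :: nat and \<beta> :: real
  assume \<epsilon>: "\<epsilon> > 0" and hb: "\<beta> \<in> \<rat> \<and> \<beta> \<ge> 1 \<and> \<beta> \<ge> 7/3 + \<epsilon>"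
    and ip: "is_power (subword hfix i m) \<beta>"
  from ip obtain x x' n where x: "x \<noteq> []" "prefix x' x"
    "subword hfix i m = concat (replicate n x) @ x'"
    "real n + real (length x') / real (length x) = \<beta>"
    unfolding is_power_def by blast
  define p where "p = length x"
  have p0: "0 < p" using x(1) by (simp add: p_def)
  have lsub: "length (subword hfix i m) = m" by (simp add: subword_def)
  have lenu: "m = n * p + length x'"
    using arg_cong[OF x(3), of length] lsub by (simp add: p_def length_concat sum_list_replicate)
  have rm: "real m = \<beta> * real p"
    using p0 by (simp add: x(4)[symmetric] lenu p_def field_simps)
  have "7 / 3 * real p < \<beta> * real p" using hb \<epsilon> p0 by (intro mult_strict_right_mono) auto
  then have "real (7 * p) < real (3 * m)" using rm by simp
  then have bad: "7 * p < 3 * m" by (simp only: of_nat_less_iff)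
  have per: "\<forall>t. i \<le> t \<and> t + p < i + m \<longrightarrow> hfix t = hfix (t + p)"
  proof (intro allI impI)
    fix t assume t: "i \<le> t \<and> t + p < i + m"
    let ?u = "subword hfix i m"
    have nth_u: "\<And>s. s < m \<Longrightarrow> ?u ! s = hfix (i + s)" by (simp add: subword_def)
    have eq: "?u ! (t - i) = ?u ! (t - i + p)"
      unfolding x(3) p_def
      by (rule pow_period[OF x(2)]) (use t lsub x(3) p_def in auto)
    have c1: "t - i < m" "t - i + p < m" using t by auto
    have A: "?u ! (t - i) = hfix t" using nth_u[OF c1(1)] t by simp
    have B: "?u ! (t - i + p) = hfix (t + p)" using nth_u[OF c1(2)] t by simp
    show "hfix t = hfix (t + p)" using A B eq by argo
  qed
  have "3 * m \<le> 7 * p" by (rule main[OF p0 per])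
  then show False using bad by simp
qed

end
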